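(* Let $\sigma,\eta>0$ and $\mathscr{C}$ be a family of balls as in the context. Let $B,B'\in\mathscr{C}$ with $B'\not\subset B^{(3)}$. Then \[ (1-\beta)|x_B-x_{B'}|\le|x-y|\le 2|x_B-x_{B'}|\quad\text{for all }x\in B,\ y\in B', \] where $\beta:=(1+2/\eta^2)^{-1/2}\in(0,1)$.
   Context: Cover: for constants $\sigma,\eta>0$, $\mathscr{C}$ is a family of closed balls in $\mathbb{R}^3$ with $\bigcup_{B\in\mathscr{C}}B=\mathbb{R}^3$ and $|B|\geq 4\pi/3$ for all $B\in\mathscr{C}$, such that (i) each ball in $\mathscr{C}$ intersects at most $\sigma$ balls in $\mathscr{C}$, and (ii) if $B,B'\in\mathscr{C}$ intersect then $\eta^{-1}\le |B|^{1/3}/|B'|^{1/3}\le\eta$. $x_B$ denotes the center of $B$. Layers: for $B\in\mathscr{C}$ set $B^{(0)}:=B$, $P^{(0)}:=\{B\}$, and for $n\ge1$, $P^{(n)}:=\{B'\in\mathscr{C}: B'\cap B^{(n-1)}\neq\emptyset\}$, $B^{(n)}:=\bigcup_{B'\in P^{(n)}}B'$. *)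

theory Defs
  imports "HOL-Analysis.Analysis"
begin

type_synonym R3 = "real^3"

definition is_closed_ball :: "R3 set \<Rightarrow> bool" where
  "is_closed_ball B \<longleftrightarrow> (\<exists>c r. 0 < r \<and> B = cball c r)"

definition ball_center :: "R3 set \<Rightarrow> R3" where
  "ball_center B = (SOME c. \<exists>r. 0 < r \<and> B = cball c r)"

definition vol :: "R3 set \<Rightarrow> real" where
  "vol B = measure lborel B"

definition admissible_cover :: "real \<Rightarrow> real \<Rightarrow> R3 set set \<Rightarrow> bool" where
  "admissible_cover \<sigma> \<eta> \<C> \<longleftrightarrow>
     (\<forall>B\<in>\<C>. is_closed_ball B) \<and>
     \<Union>\<C> = UNIV \<and>
     (\<forall>B\<in>\<C>. vol B \<ge> 4 * pi / 3) \<and>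
     (\<forall>B\<in>\<C>. finite {B'\<in>\<C>. B' \<inter> B \<noteq> {}} \<and> real (card {B'\<in>\<C>. B' \<inter> B \<noteq> {}}) \<le> \<sigma>) \<and>
     (\<forall>B\<in>\<C>. \<forall>B'\<in>\<C>. B \<inter> B' \<noteq> {} \<longrightarrow>
         inverse \<eta> \<le> vol B powr (1/3) / vol B' powr (1/3) \<and>
         vol B powr (1/3) / vol B' powr (1/3) \<le> \<eta>)"

primrec layer :: "R3 set set \<Rightarrow> R3 set \<Rightarrow> nat \<Rightarrow> R3 set" where
  "layer \<C> B 0 = B"
| "layer \<C> B (Suc n) = \<Union>{B'\<in>\<C>. B' \<inter> layer \<C> B n \<noteq> {}}"

end

theory Submission imports Defs begin

lemma vol_cball: "0 \<le> \<rho> \<Longrightarrow> vol (cball (e::R3) \<rho>) = 4/3*pi*\<rho>^3"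
  unfolding vol_def using content_cball[of \<rho> e] by (simp add: unit_ball_vol_3)

lemma vol_root: assumes "0 \<le> \<rho>"
  shows "vol (cball (e::R3) \<rho>) powr (1/3) = (4/3*pi) powr (1/3) * \<rho>"
proof -
  have "vol (cball e \<rho>) powr (1/3) = (4/3*pi) powr (1/3) * (\<rho>^3) powr (1/3)"
    unfolding vol_cball[OF assms] using assms powr_mult[of "4/3*pi" "\<rho>^3" "1/3"] by simp
  also have "(\<rho>^3) powr (1/3) = \<rho>"
  proof (cases "\<rho> = 0")
    case False
    then have "\<rho>^3 = \<rho> powr 3" using assms powr_realpow[of \<rho> 3] by simp
    then have "(\<rho>^3) powr (1/3) = \<rho> powr (3 * (1/3))" by (simp only: powr_powr)
    then show ?thesis using False assms by simp
  qed simp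
  finally show ?thesis .
qed

lemma center_cball: "0 < r \<Longrightarrow> ball_center (cball (c::R3) r) = c"
  unfolding ball_center_def
  by (rule some_equality) (auto simp: cball_eq_cball_iff)

lemma cballs_meet:
  fixes e c :: R3
  assumes "0 \<le> s" "0 \<le> r" "dist e c \<le> s + r"
  shows "cball e s \<inter> cball c r \<noteq> {}"
proof (cases "s + r = 0")
  case True then have "e = c" using assms by auto
  then show ?thesis using assms by (metis IntI centre_in_cball empty_iff)
next
  case False
  then have sr: "s + r > 0" using assms by auto
  define p where "p = e + (s/(s+r)) *\<^sub>R (c - e)"
  have "dist e p = s/(s+r) * dist e c"
    by (simp add: p_def dist_norm norm_minus_commute assms sr)
  also have "\<dots> \<le> s" using assms sr mult_left_mono[OF assms(3) assms(1)] by (simp add: field_simps algebra_simps)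
  finally have 1: "p \<in> cball e s" by simp
  have "c - p = (r/(s+r)) *\<^sub>R (c - e)" using sr
    by (simp add: p_def algebra_simps field_simps) (simp add: scaleR_left_distrib[symmetric] divide_simps)
  then have "dist c p = r/(s+r) * dist e c"
    by (simp add: dist_norm norm_minus_commute assms sr)
  also have "\<dots> \<le> r" using assms sr mult_left_mono[OF assms(3) assms(2)] by (simp add: field_simps algebra_simps)
  finally have 2: "p \<in> cball c r" by simp
  show ?thesis using 1 2 by blast
qed

lemma stewart:
  fixes e c c' :: R3 and u :: real
  shows "(1-u)*(norm (e-c))^2 + u*(norm (e-c'))^2
     = (norm (e - ((1-u) *\<^sub>R c + u *\<^sub>R c')))^2 + u*(1-u)*(norm (c'-c))^2"
proof -
  have eq: "e - ((1-u) *\<^sub>R c + u *\<^sub>R c') = (1-u) *\<^sub>R (e-c) + u *\<^sub>R (e-c')"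
    by (simp add: algebra_simps)
  have eq2: "c' - c = (e-c) - (e-c')" by simp
  show ?thesis unfolding eq eq2 power2_norm_eq_inner
    by (simp add: inner_add_left inner_add_right inner_diff_left inner_diff_right inner_commute algebra_simps power2_eq_square)
qed

lemma chain:
  assumes "X \<in> \<C>" "Y \<in> \<C>" "B' \<in> \<C>" "X \<inter> B \<noteq> {}" "X \<inter> Y \<noteq> {}" "Y \<inter> B' \<noteq> {}"
  shows "B' \<subseteq> layer \<C> B 3"
proof -
  have 1: "X \<subseteq> layer \<C> B 1" using assms by auto
  have "Y \<inter> layer \<C> B 1 \<noteq> {}" using 1 assms by blast
  then have 2: "Y \<subseteq> layer \<C> B 2" using assms by (auto simp: numeral_2_eq_2)
  have "B' \<inter> layer \<C> B 2 \<noteq> {}" using 2 assms by blast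
  then have "B' \<in> {Z\<in>\<C>. Z \<inter> layer \<C> B 2 \<noteq> {}}" using assms by blast
  moreover have "layer \<C> B 3 = \<Union>{Z\<in>\<C>. Z \<inter> layer \<C> B 2 \<noteq> {}}"
    by (simp add: numeral_3_eq_3 numeral_2_eq_2)
  ultimately show ?thesis by blast
qed

lemma poly_core:
  fixes r t x y :: real
  assumes "r \<ge> 0" "t \<ge> 0" "x \<ge> 0" "y \<ge> 0"
  shows "(r+r+t)^2 * ((r+t+y)*x*(2*r+x) + (r+x)*y*(2*(r+t)+y))
         \<le> (r+t)*((r+t+y)*r+(r+x)*(r+t))*(2*(r+r+t)*(x+y)+(x+y)^2)"
proof -
  have "(r+t)*((r+t+y)*r+(r+x)*(r+t))*(2*(r+r+t)*(x+y)+(x+y)^2)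
      - (r+r+t)^2 * ((r+t+y)*x*(2*r+x) + (r+x)*y*(2*(r+t)+y))
      = t^2*x^2*y + t^2*x^3 + t^3*x^2 + r*t*y^3 + r*t*x^2*y + 2*r*t*x^3
       + 3*r*t^2*y^2 + 2*r*t^2*x*y + 5*r*t^2*x^2 + 2*r*t^3*y + 2*r*t^3*x
       + r^2*(x+y)*(x-y)^2 + 6*r^2*t*y^2 + 6*r^2*t*x^2 + 6*r^2*t^2*y + 6*r^2*t^2*x
       + 2*r^3*(x-y)^2 + 4*r^3*t*y + 4*r^3*t*x"
    by (simp add: algebra_simps power2_eq_square power3_eq_cube)
  moreover have "0 \<le> t^2*x^2*y + t^2*x^3 + t^3*x^2 + r*t*y^3 + r*t*x^2*y + 2*r*t*x^3
       + 3*r*t^2*y^2 + 2*r*t^2*x*y + 5*r*t^2*x^2 + 2*r*t^3*y + 2*r*t^3*x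
       + r^2*(x+y)*(x-y)^2 + 6*r^2*t*y^2 + 6*r^2*t*x^2 + 6*r^2*t^2*y + 6*r^2*t^2*x
       + 2*r^3*(x-y)^2 + 4*r^3*t*y + 4*r^3*t*x"
    using assms by (intro add_nonneg_nonneg mult_nonneg_nonneg) auto
  ultimately show ?thesis by linarith
qed

lemma core:
  fixes a b r r' q K :: real
  assumes "0 < r" "r \<le> r'" "r < a" "r' < b" "r' * K \<le> q" "0 \<le> K"
    and "(a+b)^2 < (r+r')^2 * (1 + 2*K)"
    and "b*(q+r)^2 + a*(q+r')^2 < (a+b)*q^2 + a*b*(a+b)"
  shows False
proof -
  define S where "S = r + r'"
  have S: "S > 0" using assms S_def by auto
  have 1: "2*q*(b*r+a*r') + b*r^2 + a*r'^2 < a*b*(a+b)"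
    using assms(8) by (simp add: algebra_simps power2_eq_square)
  have pos: "b*r+a*r' > 0" using assms by (simp add: add_pos_pos)
  have 2: "2*(r'*K)*(b*r+a*r') \<le> 2*q*(b*r+a*r')"
    using assms(5) pos by (intro mult_right_mono) auto
  have 3: "(a+b)^2 - S^2 < S^2 * (2*K)" using assms(7) S_def by (simp add: algebra_simps)
  have 4: "r'*(b*r+a*r')*((a+b)^2 - S^2) \<le> r'*(b*r+a*r')*(S^2*(2*K))"
    using 3 pos assms by (intro mult_left_mono) auto
  have 5: "S^2*(a*b*(a+b) - b*r^2 - a*r'^2) \<le> r'*(b*r+a*r')*((a+b)^2 - S^2)"
    using poly_core[of r "r'-r" "a-r" "b-r'"] assms S_def
    by (simp add: algebra_simps power2_eq_square)
  have 6: "S^2 * (2*(r'*K)*(b*r+a*r')) < S^2*(a*b*(a+b) - b*r^2 - a*r'^2)"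
    using 1 2 S by (intro mult_strict_left_mono) auto
  show False using 4 5 6 by (simp add: algebra_simps)
qed

lemma adm_D:
  assumes "admissible_cover \<sigma> \<eta> \<C>"
  shows "\<forall>B\<in>\<C>. is_closed_ball B" "\<Union>\<C> = UNIV" "\<forall>B\<in>\<C>. vol B \<ge> 4 * pi / 3"
    "\<forall>B\<in>\<C>. finite {B'\<in>\<C>. B' \<inter> B \<noteq> {}}"
    "\<forall>B\<in>\<C>. \<forall>B'\<in>\<C>. B \<inter> B' \<noteq> {} \<longrightarrow> inverse \<eta> \<le> vol B powr (1/3) / vol B' powr (1/3)"
  using assms unfolding admissible_cover_def by simp_all

lemma cover_rad:
  assumes "admissible_cover \<sigma> \<eta> \<C>" "X \<in> \<C>"
  shows "\<exists>e \<rho>. 1 \<le> \<rho> \<and> X = cball e \<rho>"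
proof -
  have "is_closed_ball X" using adm_D(1)[OF assms(1)] assms(2) by blast
  then obtain e \<rho> where r: "0 < \<rho>" "X = cball e \<rho>"
    unfolding is_closed_ball_def by blast
  have "vol X \<ge> 4*pi/3" using adm_D(3)[OF assms(1)] assms(2) by blast
  then have v: "4/3*pi*\<rho>^3 \<ge> 4*pi/3" using r vol_cball[of \<rho> e] by simp
  have "1 \<le> \<rho>"
  proof (rule ccontr)
    assume "\<not> 1 \<le> \<rho>"
    then have "\<rho>^3 < 1^3" using r by (intro power_strict_mono) auto
    then have "4/3*pi*\<rho>^3 < 4/3*pi*1" by (intro mult_strict_left_mono) auto
    then show False using v by simp
  qed
  then show ?thesis using r by blast
qed

lemma cover_ratio:
  assumes "admissible_cover \<sigma> \<eta> \<C>" "\<eta> > 0"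
    "cball e1 \<rho>1 \<in> \<C>" "cball e2 \<rho>2 \<in> \<C>" "0 < \<rho>1" "0 < \<rho>2"
    "cball e1 \<rho>1 \<inter> cball e2 \<rho>2 \<noteq> {}"
  shows "\<rho>2 \<le> \<eta> * \<rho>1"
proof -
  have "inverse \<eta> \<le> vol (cball e1 \<rho>1) powr (1/3) / vol (cball e2 \<rho>2) powr (1/3)"
    using adm_D(5)[OF assms(1)] assms(3,4,7) by blast
  also have "\<dots> = \<rho>1 / \<rho>2" using assms by (simp add: vol_root)
  finally have "inverse \<eta> \<le> \<rho>1 / \<rho>2" .
  then have "inverse \<eta> * (\<eta> * \<rho>2) \<le> \<rho>1 / \<rho>2 * (\<eta> * \<rho>2)"
    using assms by (intro mult_right_mono) auto
  then show ?thesis using assms by (simp add: field_simps)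
qed

lemma locfin:
  assumes adm: "admissible_cover \<sigma> \<eta> \<C>" and K: "K \<subseteq> cball z R"
  shows "finite {X\<in>\<C>. X \<inter> K \<noteq> {}}"
proof (rule ccontr)
  define I where "I = {X\<in>\<C>. X \<inter> K \<noteq> {}}"
  assume inf: "infinite {X\<in>\<C>. X \<inter> K \<noteq> {}}"
  then have infI: "infinite I" by (simp add: I_def)
  have "\<exists>m. cball m (1/2) \<subseteq> X \<and> m \<in> cball z (R+1)" if XI: "X \<in> I" for X
  proof -
    obtain e \<rho> where er: "1 \<le> \<rho>" "X = cball e \<rho>" using cover_rad[OF adm, of X] XI I_def by blast
    obtain w where w: "w \<in> X" "w \<in> K" using XI I_def by blast
    define m where "m = e + ((\<rho> - 1/2)/\<rho>) *\<^sub>R (w - e)"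
    have de: "dist e m = (\<rho> - 1/2)/\<rho> * dist e w"
      using er by (simp add: m_def dist_norm norm_minus_commute)
    have dew: "dist e w \<le> \<rho>" using w er by simp
    have "(\<rho> - 1/2)/\<rho> * dist e w \<le> (\<rho> - 1/2)/\<rho> * \<rho>"
      using er dew by (intro mult_left_mono) auto
    then have dem: "dist e m \<le> \<rho> - 1/2" using de er by simp
    have wm: "w - m = (1 - (\<rho> - 1/2)/\<rho>) *\<^sub>R (w - e)"
      unfolding m_def by (simp add: scaleR_diff_left)
    have "1 - (\<rho> - 1/2)/\<rho> = 1/(2*\<rho>)" using er by (simp add: field_simps)
    then have "w - m = (1/(2*\<rho>)) *\<^sub>R (w - e)" using wm by simp
    then have "dist w m = 1/(2*\<rho>) * dist e w" using er by (simp add: dist_norm norm_minus_commute)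
    also have "\<dots> \<le> 1/(2*\<rho>) * \<rho>" using er dew by (intro mult_left_mono) auto
    finally have "dist w m \<le> 1/2" using er by simp
    moreover have "dist z w \<le> R" using w K by auto
    ultimately have "dist z m \<le> R + 1" using dist_triangle[of z m w] by linarith
    moreover have "cball m (1/2) \<subseteq> X"
    proof
      fix y assume "y \<in> cball m (1/2)"
      then have "dist e y \<le> \<rho>" using dem dist_triangle[of e y m] by simp
      then show "y \<in> X" using er by simp
    qed
    ultimately show ?thesis by auto
  qed
  then have "\<forall>X\<in>I. \<exists>m. cball m (1/2) \<subseteq> X \<and> m \<in> cball z (R+1)" by blast
  from bchoice[OF this] obtain m where m0: "\<forall>X\<in>I. cball (m X) (1/2) \<subseteq> X \<and> m X \<in> cball z (R+1)"
    by blast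
  then have m: "\<And>X. X \<in> I \<Longrightarrow> cball (m X) (1/2) \<subseteq> X \<and> m X \<in> cball z (R+1)" by blast
  have cov: "cball z (R+1) \<subseteq> (\<Union>p\<in>cball z (R+1). ball p (1/2))"
  proof
    fix x assume "x \<in> cball z (R+1)"
    moreover have "x \<in> ball x (1/2)" by simp
    ultimately show "x \<in> (\<Union>p\<in>cball z (R+1). ball p (1/2))" by blast
  qed
  have opn: "\<And>p. p \<in> cball z (R+1) \<Longrightarrow> open (ball p (1/2))" by simp
  obtain T where T: "T \<subseteq> cball z (R+1)" "finite T" "cball z (R+1) \<subseteq> (\<Union>p\<in>T. ball p (1/2))"
    by (rule compactE_image[OF compact_cball opn cov])
  define f where "f X = (SOME p. p \<in> T \<and> m X \<in> ball p (1/2))" for X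
  have f: "f X \<in> T \<and> m X \<in> ball (f X) (1/2)" if "X \<in> I" for X
  proof -
    have "\<exists>p. p \<in> T \<and> m X \<in> ball p (1/2)" using m[OF that] T by blast
    then show ?thesis unfolding f_def by (rule someI_ex)
  qed
  have "f ` I \<subseteq> T" using f by blast
  then have "finite (f ` I)" using T(2) by (rule finite_subset)
  then obtain X0 where X0: "X0 \<in> I" "infinite {X\<in>I. f X = f X0}"
    using pigeonhole_infinite[OF infI] by blast
  have "{X\<in>I. f X = f X0} \<subseteq> {B'\<in>\<C>. B' \<inter> X0 \<noteq> {}}"
  proof
    fix X assume X: "X \<in> {X\<in>I. f X = f X0}"
    then have XI: "X \<in> I" and eq: "f X = f X0" by auto
    have d1: "dist (f X) (m X) < 1/2" using f[OF XI] by simp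
    have d2: "dist (f X) (m X0) < 1/2" using f[OF X0(1)] eq by simp
    have "dist (m X) (m X0) \<le> dist (m X) (f X) + dist (f X) (m X0)" by (rule dist_triangle)
    then have "dist (m X) (m X0) < 1/2 + 1/2" using d1 d2 by (simp add: dist_commute)
    then have "cball (m X) (1/2) \<inter> cball (m X0) (1/2) \<noteq> {}"
      by (intro cballs_meet) auto
    then have "X \<inter> X0 \<noteq> {}" using m[OF XI] m[OF X0(1)] by blast
    then show "X \<in> {B'\<in>\<C>. B' \<inter> X0 \<noteq> {}}" using XI I_def by auto
  qed
  moreover have "finite {B'\<in>\<C>. B' \<inter> X0 \<noteq> {}}"
    using adm_D(4)[OF adm] X0(1) unfolding I_def by blast
  ultimately have "finite {X\<in>I. f X = f X0}" by (rule finite_subset)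
  then show False using X0(2) by simp
qed

lemma main_contr:
  fixes c c' :: R3
  assumes adm: "admissible_cover \<sigma> \<eta> \<C>" and eta: "\<eta> > 0"
    and BB: "B = cball c r" "B' = cball c' r'" "B \<in> \<C>" "B' \<in> \<C>" "0 < r" "r \<le> r'"
    and NC: "\<And>X Y. X \<in> \<C> \<Longrightarrow> Y \<in> \<C> \<Longrightarrow> X \<inter> B \<noteq> {} \<Longrightarrow> X \<inter> Y \<noteq> {} \<Longrightarrow> Y \<inter> B' \<noteq> {} \<Longrightarrow> False"
    and K: "K = 1 / \<eta>^2"
    and dd: "(dist c c')^2 < (r+r')^2 * (1 + 2*K)"
  shows False
proof -
  have r'0: "0 < r'" using BB by simp
  have cB: "c \<in> B" and cB': "c' \<in> B'" using BB by auto
  have disj: "B \<inter> B' = {}"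
  proof (rule ccontr)
    assume "B \<inter> B' \<noteq> {}"
    then show False using NC[of B B'] BB cB cB' by blast
  qed
  define d where "d = dist c c'"
  have "c \<noteq> c'"
  proof
    assume "c = c'"
    then show False using disj cB cB' by blast
  qed
  then have d0: "d > 0" by (simp add: d_def)
  define Seg where "Seg = closed_segment c c'"
  have SegK: "Seg \<subseteq> cball c d"
  proof
    fix x assume "x \<in> Seg"
    then have "dist x c \<le> dist c c'" using dist_in_closed_segment[of x c c'] unfolding Seg_def by blast
    then show "x \<in> cball c d" by (simp add: d_def dist_commute)
  qed
  define F where "F = {X\<in>\<C>. X \<inter> Seg \<noteq> {}}"
  have finF: "finite F" unfolding F_def by (rule locfin[OF adm SegK])
  define P where "P = \<Union>{X\<in>F. X \<inter> B' = {}}"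
  define Q where "Q = \<Union>{X\<in>F. X \<inter> B' \<noteq> {}}"
  have clX: "closed X" if "X \<in> \<C>" for X
    using cover_rad[OF adm that] by auto
  have f1: "finite {X\<in>F. X \<inter> B' = {}}" by (rule finite_subset[OF _ finF]) auto
  have f2: "finite {X\<in>F. X \<inter> B' \<noteq> {}}" by (rule finite_subset[OF _ finF]) auto
  have clP: "closed P" unfolding P_def
    by (rule closed_Union[OF f1]) (use F_def clX in auto)
  have clQ: "closed Q" unfolding Q_def
    by (rule closed_Union[OF f2]) (use F_def clX in auto)
  have cover: "Seg \<subseteq> P \<union> Q"
  proof
    fix x assume x: "x \<in> Seg"
    have "x \<in> \<Union>\<C>" using adm_D(2)[OF adm] by simp
    then obtain X where X: "X \<in> \<C>" "x \<in> X" by blast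
    then have "X \<in> F" using x F_def by blast
    then show "x \<in> P \<union> Q" using X P_def Q_def by blast
  qed
  have cSeg: "c \<in> Seg" and c'Seg: "c' \<in> Seg" unfolding Seg_def by auto
  have PS: "P \<inter> Seg \<noteq> {}"
  proof -
    have "B \<in> F" using BB cSeg cB F_def by blast
    then have "c \<in> P" using disj cB P_def by blast
    then show ?thesis using cSeg by blast
  qed
  have QS: "Q \<inter> Seg \<noteq> {}"
  proof -
    have "B' \<in> F" using BB c'Seg cB' F_def by blast
    then have "c' \<in> Q" using cB' Q_def by blast
    then show ?thesis using c'Seg by blast
  qed
  have PQ: "P \<inter> Q \<inter> Seg = {}"
  proof (rule ccontr)
    assume "P \<inter> Q \<inter> Seg \<noteq> {}"
    then obtain x X Y where x: "x \<in> Seg" and X: "X \<in> F" "X \<inter> B' = {}" "x \<in> X"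
      and Y: "Y \<in> F" "Y \<inter> B' \<noteq> {}" "x \<in> Y"
      unfolding P_def Q_def by blast
    have XC: "X \<in> \<C>" and YC: "Y \<in> \<C>" using X Y F_def by auto
    have XY: "X \<inter> Y \<noteq> {}" using X Y by blast
    show False
    proof (cases "X \<inter> B = {}")
      case False
      show ?thesis using NC[OF XC YC False XY Y(2)] .
    next
      case XB: True
      obtain e s where es: "1 \<le> s" "X = cball e s" using cover_rad[OF adm XC] by blast
      obtain e2 \<rho> where e2: "1 \<le> \<rho>" "Y = cball e2 \<rho>" using cover_rad[OF adm YC] by blast
      have "r' \<le> \<eta> * \<rho>"
        using cover_ratio[OF adm eta, of e2 \<rho> c' r'] e2 BB YC Y(2) by (simp add: Int_commute)
      moreover have "\<rho> \<le> \<eta> * s"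
        using cover_ratio[OF adm eta, of e s e2 \<rho>] es e2 XC YC XY by simp
      moreover have "\<eta> * \<rho> \<le> \<eta> * (\<eta> * s)" using \<open>\<rho> \<le> \<eta> * s\<close> eta by (intro mult_left_mono) auto
      ultimately have "r' \<le> \<eta> * (\<eta> * s)" by linarith
      then have "r' \<le> \<eta>^2 * s" by (simp add: power2_eq_square mult.assoc)
      then have "r' * K \<le> (\<eta>^2 * s) * K" using K by (intro mult_right_mono) auto
      also have "\<dots> = s" using eta K by (simp add: field_simps)
      finally have sK: "r' * K \<le> s" .
      have K0: "0 \<le> K" using K by simp
      have ec: "dist e c > s + r"
      proof (rule ccontr)
        assume "\<not> dist e c > s + r"
        then have "cball e s \<inter> cball c r \<noteq> {}" using es BB by (intro cballs_meet) auto
        then show False using XB es BB by simp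
      qed
      have ec': "dist e c' > s + r'"
      proof (rule ccontr)
        assume "\<not> dist e c' > s + r'"
        then have "cball e s \<inter> cball c' r' \<noteq> {}" using es r'0 by (intro cballs_meet) auto
        then show False using X(2) es BB by simp
      qed
      have ex: "dist e x \<le> s" using X(3) es by simp
      obtain u where u: "0 \<le> u" "u \<le> 1" "x = (1-u) *\<^sub>R c + u *\<^sub>R c'"
        using x unfolding Seg_def closed_segment_def by blast
      have "c - x = u *\<^sub>R (c - c')" using u by (simp add: algebra_simps)
      then have da: "dist c x = u * d" using u by (simp add: dist_norm d_def)
      have "x - c' = (1-u) *\<^sub>R (c - c')" using u by (simp add: algebra_simps)
      then have db: "dist x c' = (1-u) * d" using u by (simp add: dist_norm d_def)
      have xB: "x \<notin> B" using XB X(3) by blast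
      have xB': "x \<notin> B'" using X(2,3) by blast
      have a: "u * d > r" using xB da BB by simp
      have b: "(1-u) * d > r'" using xB' db BB by (simp add: dist_commute)
      have u0: "u > 0"
      proof (rule ccontr)
        assume "\<not> 0 < u"
        then have "u = 0" using u(1) by simp
        then show False using a BB by simp
      qed
      have u1: "1 - u > 0"
      proof (rule ccontr)
        assume "\<not> 0 < 1 - u"
        then have "1 - u = 0" using u(2) by simp
        then show False using b r'0 by simp
      qed
      have st: "(1-u)*(norm (e-c))^2 + u*(norm (e-c'))^2
         = (norm (e - x))^2 + u*(1-u)*(norm (c'-c))^2"
        using stewart[of u e c c'] u by simp
      have ncc: "norm (c' - c) = d" by (simp add: d_def dist_norm norm_minus_commute)
      have s0: "0 \<le> s" using es by simp
      have i1: "(s+r)^2 < (norm (e-c))^2"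
        using ec s0 BB by (intro power_strict_mono) (auto simp: dist_norm)
      have i2: "(s+r')^2 < (norm (e-c'))^2"
        using ec' s0 r'0 by (intro power_strict_mono) (auto simp: dist_norm)
      have i3: "(norm (e-x))^2 \<le> s^2"
        using ex by (intro power_mono) (auto simp: dist_norm)
      have "(1-u)*(s+r)^2 < (1-u)*(norm (e-c))^2" using i1 u1 by simp
      moreover have "u*(s+r')^2 < u*(norm (e-c'))^2" using i2 u0 by simp
      ultimately have ineq: "(1-u)*(s+r)^2 + u*(s+r')^2 < s^2 + u*(1-u)*d^2"
        using st[unfolded ncc] i3 by linarith
      define a where "a = u * d"
      define b where "b = (1-u) * d"
      have ab: "a + b = d" by (simp add: a_def b_def algebra_simps)
      have "d * ((1-u)*(s+r)^2 + u*(s+r')^2) < d * (s^2 + u*(1-u)*d^2)"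
        using ineq d0 by simp
      then have main: "b*(s+r)^2 + a*(s+r')^2 < (a+b)* s^2 + a*b*(a+b)"
        unfolding ab by (simp add: a_def b_def algebra_simps power2_eq_square)
      have dd': "(a+b)^2 < (r+r')^2 * (1 + 2*K)" using dd ab d_def by simp
      have ar: "r < a" using a a_def by simp
      have br: "r' < b" using b b_def by simp
      show False
        using core[OF BB(5) BB(6) ar br sK K0 dd' main] .
    qed
  qed
  have "connected Seg" unfolding Seg_def by simp
  then have nc: "\<not> (\<exists>A B. closed A \<and> closed B \<and> Seg \<subseteq> A \<union> B \<and> A \<inter> B \<inter> Seg = {} \<and> A \<inter> Seg \<noteq> {} \<and> B \<inter> Seg \<noteq> {})"
    by (simp only: connected_closed simp_thms)
  have "\<exists>A B. closed A \<and> closed B \<and> Seg \<subseteq> A \<union> B \<and> A \<inter> B \<inter> Seg = {} \<and> A \<inter> Seg \<noteq> {} \<and> B \<inter> Seg \<noteq> {}"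
    using clP clQ cover PQ PS QS by (intro exI[of _ P] exI[of _ Q]) simp
  with nc show False by (rule notE)
qed

theorem lemma3p4:
  fixes \<sigma> \<eta> :: real and \<C> :: "R3 set set" and B B' :: "R3 set"
  assumes "\<sigma> > 0" and "\<eta> > 0"
    and "admissible_cover \<sigma> \<eta> \<C>"
    and "B \<in> \<C>" and "B' \<in> \<C>"
    and "\<not> B' \<subseteq> layer \<C> B 3"
  shows "(let \<beta> = (1 + 2 / \<eta>\<^sup>2) powr (-1/2) in
           0 < \<beta> \<and> \<beta> < 1 \<and>
           (\<forall>x\<in>B. \<forall>y\<in>B'.
              (1 - \<beta>) * dist (ball_center B) (ball_center B') \<le> dist x y \<and>
              dist x y \<le> 2 * dist (ball_center B) (ball_center B')))"
proof -
  note adm = assms(3) and eta = assms(2)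
  have "is_closed_ball B" using adm_D(1)[OF adm] assms(4) by blast
  then obtain c r where B: "0 < r" "B = cball c r" unfolding is_closed_ball_def by blast
  have "is_closed_ball B'" using adm_D(1)[OF adm] assms(5) by blast
  then obtain c' r' where B': "0 < r'" "B' = cball c' r'" unfolding is_closed_ball_def by blast
  have cen: "ball_center B = c" "ball_center B' = c'" using B B' center_cball by auto
  define d where "d = dist c c'"
  define K where "K = 1 / \<eta>^2"
  define X0 where "X0 = 1 + 2 / \<eta>^2"
  define \<beta> where "\<beta> = X0 powr (-1/2)"
  have X0: "X0 > 1" using eta by (simp add: X0_def)
  have X0K: "X0 = 1 + 2*K" by (simp add: X0_def K_def)
  have \<beta>0: "0 < \<beta>" using X0 by (simp add: \<beta>_def)
  have \<beta>1: "\<beta> < 1" unfolding \<beta>_def by (rule powr_less_one[OF X0]) simp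
  have NC: "\<And>X Y. X \<in> \<C> \<Longrightarrow> Y \<in> \<C> \<Longrightarrow> X \<inter> B \<noteq> {} \<Longrightarrow> X \<inter> Y \<noteq> {} \<Longrightarrow> Y \<inter> B' \<noteq> {} \<Longrightarrow> False"
    using chain[of _ \<C> _ B' B] assms(5,6) by blast
  have d0: "0 \<le> d" by (simp add: d_def)
  have key: "r + r' \<le> \<beta> * d"
  proof (rule ccontr)
    assume "\<not> r + r' \<le> \<beta> * d"
    then have lt: "\<beta> * d < r + r'" by simp
    have "\<beta>^2 = X0 powr (-1/2) * X0 powr (-1/2)" by (simp add: \<beta>_def power2_eq_square)
    also have "\<dots> = X0 powr (-1)" by (simp add: powr_add[symmetric])
    also have "\<dots> = inverse X0" using X0 by (simp add: powr_minus)
    finally have b2: "\<beta>^2 = inverse X0" .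
    have "(\<beta> * d)^2 < (r + r')^2" using lt \<beta>0 d0 by (intro power_strict_mono) auto
    then have "inverse X0 * d^2 < (r+r')^2" using b2 by (simp add: power_mult_distrib)
    then have "X0 * (inverse X0 * d^2) < X0 * (r+r')^2" using X0 by (intro mult_strict_left_mono) auto
    moreover have "X0 * (inverse X0 * d^2) = d^2" using X0 by (simp add: mult.assoc[symmetric])
    ultimately have "d^2 < X0 * (r+r')^2" by simp
    then have dd: "(dist c c')^2 < (r+r')^2 * (1 + 2*K)" unfolding X0K d_def by (simp add: mult.commute)
    show False
    proof (cases "r \<le> r'")
      case True
      show False by (rule main_contr[OF adm eta B(2) B'(2) assms(4,5) B(1) True NC K_def dd])
    next
      case False
      then have le: "r' \<le> r" by simp
      have NC': "\<And>X Y. X \<in> \<C> \<Longrightarrow> Y \<in> \<C> \<Longrightarrow> X \<inter> B' \<noteq> {} \<Longrightarrow> X \<inter> Y \<noteq> {} \<Longrightarrow> Y \<inter> B \<noteq> {} \<Longrightarrow> False"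
        using NC by blast
      have dd': "(dist c' c)^2 < (r'+r)^2 * (1 + 2*K)" using dd by (simp add: dist_commute add.commute)
      show False by (rule main_contr[OF adm eta B'(2) B(2) assms(5,4) B'(1) le NC' K_def dd'])
    qed
  qed
  have bounds: "(1 - \<beta>) * d \<le> dist x y \<and> dist x y \<le> 2 * d" if x: "x \<in> B" and y: "y \<in> B'" for x y
  proof -
    have cx: "dist c x \<le> r" using x B by simp
    have cy: "dist c' y \<le> r'" using y B' by simp
    have "d \<le> dist c x + dist x c'" unfolding d_def by (rule dist_triangle)
    moreover have "dist x c' \<le> dist x y + dist y c'" by (rule dist_triangle)
    ultimately have l: "d \<le> r + dist x y + r'" using cx cy by (simp add: dist_commute)
    have "dist x y \<le> dist x c + dist c y" by (rule dist_triangle)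
    moreover have "dist c y \<le> dist c c' + dist c' y" by (rule dist_triangle)
    ultimately have u: "dist x y \<le> r + d + r'" using cx cy by (simp add: dist_commute d_def)
    have "\<beta> * d \<le> 1 * d" using \<beta>1 d0 by (intro mult_right_mono) auto
    then have "\<beta> * d \<le> d" by simp
    then show ?thesis using l u key by (simp add: algebra_simps)
  qed
  show ?thesis
    unfolding Let_def X0_def[symmetric] \<beta>_def[symmetric] cen d_def[symmetric]
    using \<beta>0 \<beta>1 bounds by blast
qed

end
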